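(* Let $p,q$ be integers with $1+|p|<|q|$ and let $g\in\mathbb{Z}[x]$. Let $\varphi_g:\mathrm{Dom}_{p,q}\to\mathrm{Dom}_{p,q}$ be the map sending $w$ to the unique $w'\in\mathrm{Dom}_{p,q}$ with $\psi_{p,q}(w')=[g\cdot f_w]_\sim$, where $f_w$ is the polynomial represented by $w$. Then $\varphi_g$ is FA-recognizable (its graph $\{(w,\varphi_g(w))\}$ is an FA-recognizable binary relation).
   Context: Let $p,q$ be integers with $1+|p|<|q|$ and $t(x)=x^2+px-q$. For $f,g\in\mathbb{Z}[x]$ write $f\sim g$ if $t$ divides $f-g$; identify $\mathbb{Z}^2$ with the additive group of $\mathbb{Z}[x]/\langle t\rangle$ via $(h_1,h_2)\mapsto[h_1x+h_2]_\sim$, and put $\eta=[x]_\sim$, $\xi=[1]_\sim$. A polynomial $\sum a_ix^i$ is reduced if $|a_i|<|q|$ for all $i$. Let $\Sigma_q=\{-(|q|-1),\dots,|q|-1\}$ with the order $-(|q|-1)<\dots<|q|-1$; a string $a_0a_1\dots a_n\in\Sigma_q^*$ represents the reduced polynomial $a_nx^n+\dots+a_1x+a_0$, and two strings are equivalent if their polynomials are $\sim$-equivalent. $\mathrm{Dom}_{p,q}$ is the set of $w\in\Sigma_q^*$ such that no string $u$ strictly smaller than $w$ in the length-lexicographic order on $\Sigma_q^*$ is equivalent to $w$, and $\psi_{p,q}:\mathrm{Dom}_{p,q}\to\mathbb{Z}^2$ sends $w$ to the $\sim$-class of the polynomial it represents (this is a bijection). For strings $w_1,\dots,w_m$ over an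 alphabet $\Sigma$, their convolution $w_1\otimes\dots\otimes w_m$ is the string over $(\Sigma\cup\{\diamond\})^m$ of length $\max|w_i|$ whose $k$-th letter is the column $(\sigma_1,\dots,\sigma_m)$, $\sigma_i$ being the $k$-th letter of $w_i$ if $k\le|w_i|$ and the padding symbol $\diamond$ otherwise. A relation $R\subseteq(\Sigma^* )^m$ is FA-recognizable if $\{w_1\otimes\dots\otimes w_m:(w_1,\dots,w_m)\in R\}$ is accepted by a finite automaton; a function is FA-recognizable if its graph is. *)

theory Defs
  imports "HOL-Computational_Algebra.Polynomial"
begin

definition tpoly :: "int \<Rightarrow> int \<Rightarrow> int poly" where
  "tpoly p q = [:-q, p, 1:]"

definition sim :: "int \<Rightarrow> int \<Rightarrow> int poly \<Rightarrow> int poly \<Rightarrow> bool" where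
  "sim p q f g \<longleftrightarrow> tpoly p q dvd (f - g)"

definition Sigma :: "int \<Rightarrow> int set" where
  "Sigma q = {-(\<bar>q\<bar> - 1) .. \<bar>q\<bar> - 1}"

(* the string a_0 a_1 ... a_n represents a_n x^n + ... + a_1 x + a_0 *)
definition strpoly :: "int list \<Rightarrow> int poly" where
  "strpoly w = Poly w"

definition str_equiv :: "int \<Rightarrow> int \<Rightarrow> int list \<Rightarrow> int list \<Rightarrow> bool" where
  "str_equiv p q u w \<longleftrightarrow> sim p q (strpoly u) (strpoly w)"

definition llex_less :: "int list \<Rightarrow> int list \<Rightarrow> bool" where
  "llex_less u w \<longleftrightarrow> length u < length w \<or>
     (length u = length w \<and> (\<exists>k < length u. take k u = take k w \<and> u ! k < w ! k))"

definition Dom :: "int \<Rightarrow> int \<Rightarrow> int list set" where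
  "Dom p q = {w. set w \<subseteq> Sigma q \<and>
      \<not> (\<exists>u. set u \<subseteq> Sigma q \<and> llex_less u w \<and> str_equiv p q u w)}"

definition phi :: "int \<Rightarrow> int \<Rightarrow> int poly \<Rightarrow> int list \<Rightarrow> int list" where
  "phi p q g w = (THE w'. w' \<in> Dom p q \<and> sim p q (strpoly w') (g * strpoly w))"

definition conv2 :: "'a list \<Rightarrow> 'a list \<Rightarrow> ('a option \<times> 'a option) list" where
  "conv2 u v = map (\<lambda>k. (if k < length u then Some (u ! k) else None,
                           if k < length v then Some (v ! k) else None))
                   [0..<max (length u) (length v)]"

definition fa_recognizable :: "'a list set \<Rightarrow> bool" where
  "fa_recognizable L \<longleftrightarrow>
     (\<exists>(Q :: nat set) (\<delta> :: nat \<Rightarrow> 'a \<Rightarrow> nat) s F.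
        finite Q \<and> s \<in> Q \<and> F \<subseteq> Q \<and> (\<forall>st\<in>Q. \<forall>a. \<delta> st a \<in> Q) \<and>
        L = {w. foldl \<delta> s w \<in> F})"

definition fa_recognizable_rel2 :: "('a list \<times> 'a list) set \<Rightarrow> bool" where
  "fa_recognizable_rel2 R \<longleftrightarrow> fa_recognizable {conv2 u v | u v. (u, v) \<in> R}"

end

theory Submission
  imports Defs
begin



lemma dfa_fa:
  fixes Q :: "'s set" and \<delta> :: "'s \<Rightarrow> 'a \<Rightarrow> 's"
  assumes fin: "finite Q" and sQ: "s \<in> Q" and FQ: "F \<subseteq> Q" and cl: "\<forall>st\<in>Q. \<forall>a. \<delta> st a \<in> Q"
    and L: "L = {w. foldl \<delta> s w \<in> F}"
  shows "fa_recognizable L"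
proof -
  obtain f :: "'s \<Rightarrow> nat" and n where fQ: "f ` Q = {i. i < n}" and inj: "inj_on f Q"
    using finite_imp_inj_to_nat_seg[OF fin] by blast
  define g where "g = the_inv_into Q f"
  define d where "d = (\<lambda>i a. f (\<delta> (g i) a))"
  have gf: "g (f st) = st" if "st \<in> Q" for st
    using that inj by (simp add: g_def the_inv_into_f_f)
  have fQ2: "foldl \<delta> st w \<in> Q" if "st \<in> Q" for st w
    using that by (induction w arbitrary: st) (auto simp: cl)
  have run: "foldl d (f st) w = f (foldl \<delta> st w)" if "st \<in> Q" for st w
    using that by (induction w arbitrary: st) (auto simp: d_def gf cl)
  show ?thesis unfolding fa_recognizable_def
  proof (intro exI conjI)
    show "finite (f ` Q)" using fin by simp
    show "f s \<in> f ` Q" using sQ by simp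
    show "f ` F \<subseteq> f ` Q" using FQ by auto
    show "\<forall>st\<in>f ` Q. \<forall>a. d st a \<in> f ` Q"
      using gf cl by (auto simp: d_def)
    show "L = {w. foldl d (f s) w \<in> f ` F}"
      unfolding L using run[OF sQ] fQ2[OF sQ] inj FQ
      by (auto simp: inj_on_image_mem_iff)
  qed
qed

lemma fa_dest:
  assumes "fa_recognizable L"
  obtains Q :: "nat set" and \<delta> s F where "finite Q" "s \<in> Q" "F \<subseteq> Q" "\<forall>st\<in>Q. \<forall>a. \<delta> st a \<in> Q"
    "L = {w. foldl \<delta> s w \<in> F}"
  using assms unfolding fa_recognizable_def by blast

lemma foldl_closed: "\<forall>st\<in>Q. \<forall>a. \<delta> st a \<in> Q \<Longrightarrow> s \<in> Q \<Longrightarrow> foldl \<delta> s w \<in> Q"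
  by (induction w arbitrary: s) auto

lemma fa_inter:
  assumes "fa_recognizable L1" "fa_recognizable L2"
  shows "fa_recognizable (L1 \<inter> L2)"
proof -
  obtain Q1 :: "nat set" and d1 s1 F1 where A: "finite Q1" "s1 \<in> Q1" "F1 \<subseteq> Q1" "\<forall>st\<in>Q1. \<forall>a. d1 st a \<in> Q1"
    "L1 = {w. foldl d1 s1 w \<in> F1}" using assms(1) by (rule fa_dest)
  obtain Q2 :: "nat set" and d2 s2 F2 where B: "finite Q2" "s2 \<in> Q2" "F2 \<subseteq> Q2" "\<forall>st\<in>Q2. \<forall>a. d2 st a \<in> Q2"
    "L2 = {w. foldl d2 s2 w \<in> F2}" using assms(2) by (rule fa_dest)
  define d where "d = (\<lambda>(x,y) a. (d1 x a, d2 y a))"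
  have run: "foldl d (x,y) w = (foldl d1 x w, foldl d2 y w)" for x y w
    by (induction w arbitrary: x y) (auto simp: d_def)
  show ?thesis
  proof (rule dfa_fa[where Q="Q1 \<times> Q2" and \<delta>=d and s="(s1,s2)" and F="F1 \<times> F2"])
    show "L1 \<inter> L2 = {w. foldl d (s1, s2) w \<in> F1 \<times> F2}" unfolding run using A B by auto
  qed (use A B in \<open>auto simp: d_def\<close>)
qed

lemma fa_compl:
  assumes "fa_recognizable L"
  shows "fa_recognizable (- L)"
proof -
  obtain Q1 :: "nat set" and d1 s1 F1 where A: "finite Q1" "s1 \<in> Q1" "F1 \<subseteq> Q1" "\<forall>st\<in>Q1. \<forall>a. d1 st a \<in> Q1"
    "L = {w. foldl d1 s1 w \<in> F1}" using assms(1) by (rule fa_dest)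
  show ?thesis
    by (rule dfa_fa[where Q="Q1" and \<delta>=d1 and s="s1" and F="Q1 - F1"])
       (use A foldl_closed[of Q1 d1 s1] in auto)
qed

lemma fa_proj:
  fixes L :: "('x \<times> 'y option) list set"
  assumes "fa_recognizable L"
  shows "fa_recognizable {w. \<exists>c\<in>L. map snd c = map Some w}"
proof -
  obtain Q1 :: "nat set" and d1 s1 F1 where A: "finite Q1" "s1 \<in> Q1" "F1 \<subseteq> Q1" "\<forall>st\<in>Q1. \<forall>a. d1 st a \<in> Q1"
    "L = {w. foldl d1 s1 w \<in> F1}" using assms(1) by (rule fa_dest)
  define d where "d = (\<lambda>S a. {d1 st (x, Some a) | st x. st \<in> S})"
  have run: "foldl d {s1} w = {foldl d1 s1 c | c. map snd c = map Some w}" for w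
  proof (induction w rule: rev_induct)
    case Nil
    then show ?case by auto
  next
    case (snoc a w)
    show ?case
    proof (intro set_eqI iffI)
      fix z assume "z \<in> foldl d {s1} (w @ [a])"
      then obtain st x where "st \<in> foldl d {s1} w" "z = d1 st (x, Some a)"
        by (auto simp: d_def)
      then obtain c where "map snd c = map Some w" "st = foldl d1 s1 c" using snoc by auto
      then show "z \<in> {foldl d1 s1 c |c. map snd c = map Some (w @ [a])}"
        using \<open>z = _\<close> by (intro CollectI exI[of _ "c @ [(x, Some a)]"]) auto
    next
      fix z assume "z \<in> {foldl d1 s1 c |c. map snd c = map Some (w @ [a])}"
      then obtain c where c: "map snd c = map Some (w @ [a])" "z = foldl d1 s1 c" by auto
      then have "c \<noteq> []" by auto
      then obtain c' l where cl: "c = c' @ [l]" by (metis rev_exhaust)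
      obtain x y where l: "l = (x,y)" by force
      from c cl l have "map snd c' = map Some w" "y = Some a" by auto
      then have "foldl d1 s1 c' \<in> foldl d {s1} w" using snoc by auto
      then show "z \<in> foldl d {s1} (w @ [a])"
        using c cl l \<open>y = Some a\<close> by (auto simp: d_def)
    qed
  qed
  show ?thesis
  proof (rule dfa_fa[where Q="Pow Q1" and \<delta>=d and s="{s1}" and F="{S \<in> Pow Q1. S \<inter> F1 \<noteq> {}}"])
    show "{w. \<exists>c\<in>L. map snd c = map Some w} = {w. foldl d {s1} w \<in> {S \<in> Pow Q1. S \<inter> F1 \<noteq> {}}}"
      unfolding run using A foldl_closed[of Q1 d1 s1] by auto
  qed (use A in \<open>auto simp: d_def\<close>)
qed




lemma conv2_len[simp]: "length (conv2 u v) = max (length u) (length v)"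
  by (simp add: conv2_def)

lemma conv2_nth: "k < max (length u) (length v) \<Longrightarrow> conv2 u v ! k =
   (if k < length u then Some (u ! k) else None, if k < length v then Some (v ! k) else None)"
  by (simp add: conv2_def)

lemma conv2_Nil[simp]: "conv2 [] [] = []"
  by (simp add: conv2_def)

lemma conv2_CC[simp]: "conv2 (a#u) (b#v) = (Some a, Some b) # conv2 u v"
  by (simp add: conv2_def map_upt_Suc del: upt_Suc)

lemma conv2_NC[simp]: "conv2 [] (b#v) = (None, Some b) # conv2 [] v"
  by (simp add: conv2_def map_upt_Suc del: upt_Suc)

lemma conv2_CN[simp]: "conv2 (a#u) [] = (Some a, None) # conv2 u []"
  by (simp add: conv2_def map_upt_Suc del: upt_Suc)

fun cv :: "'a list \<Rightarrow> 'a list \<Rightarrow> bool" where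
  "cv [] [] = True" | "cv (a#u) (b#v) = cv u v" | "cv [] (b#v) = cv [] v" | "cv (a#u) [] = cv u []"

fun opts :: "'a option list \<Rightarrow> 'a list" where
  "opts [] = []" | "opts (None # xs) = opts xs" | "opts (Some a # xs) = a # opts xs"

lemma opts_fst[simp]: "opts (map fst (conv2 u v)) = u"
  by (induction u v rule: cv.induct) auto

lemma opts_snd[simp]: "opts (map snd (conv2 u v)) = v"
  by (induction u v rule: cv.induct) auto

lemma conv2_inj: "conv2 u v = conv2 u' v' \<longleftrightarrow> u = u' \<and> v = v'"
  by (metis opts_fst opts_snd)

lemma map_snd_conv2: "map snd (conv2 u v) = map Some w \<longleftrightarrow> v = w \<and> length u \<le> length v"
  by (induction u v arbitrary: w rule: cv.induct) (auto simp: Cons_eq_map_conv)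

definition dv :: "(bool \<times> bool) option \<Rightarrow> ('a option \<times> 'a option) \<Rightarrow> (bool \<times> bool) option" where
  "dv st l = (case st of None \<Rightarrow> None | Some (f1, f2) \<Rightarrow>
      (case l of (None, None) \<Rightarrow> None
        | (x, y) \<Rightarrow> if (f1 \<and> x \<noteq> None) \<or> (f2 \<and> y \<noteq> None) then None
                   else Some (f1 \<or> x = None, f2 \<or> y = None)))"

lemma dv_None[simp]: "foldl dv None c = None"
  by (induction c) (auto simp: dv_def)

lemma dv_step_NS: "dv (Some (f1, f2)) (None, Some b) = (if f2 then None else Some (True, f2))"
  by (simp add: dv_def)
lemma dv_step_SN: "dv (Some (f1, f2)) (Some a, None) = (if f1 then None else Some (f1, True))"
  by (simp add: dv_def)
lemma dv_step_SS: "dv (Some (f1, f2)) (Some a, Some b) = (if f1 \<or> f2 then None else Some (f1, f2))"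
  by (simp add: dv_def)

lemma dv_run: "foldl dv (Some (f1, f2)) c \<noteq> None \<longleftrightarrow>
   (\<exists>u v. c = conv2 u v \<and> (f1 \<longrightarrow> u = []) \<and> (f2 \<longrightarrow> v = []))"
proof (induction c arbitrary: f1 f2)
  case Nil
  have "[] = conv2 [] ([]::'a list) \<and> (f1 \<longrightarrow> ([]::'a list) = []) \<and> (f2 \<longrightarrow> ([]::'a list) = [])" by simp
  then have "\<exists>u v. [] = conv2 u (v::'a list) \<and> (f1 \<longrightarrow> u = []) \<and> (f2 \<longrightarrow> v = [])" by blast
  then show ?case by simp
next
  case (Cons l c)
  obtain x y where l: "l = (x, y)" by force
  show ?case
  proof (cases x)
    case None
    note xN = None
    show ?thesis
    proof (cases y)
      case None
      have "foldl dv (Some (f1, f2)) (l # c) = None" using xN None l by (simp add: dv_def)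
      moreover have "l # c \<noteq> conv2 u v" for u v using xN None l by (cases u; cases v) auto
      ultimately show ?thesis by auto
    next
      case (Some b)
      have l': "l = (None, Some b)" using l xN Some by simp
      show ?thesis
      proof (cases f2)
        case True
        have "foldl dv (Some (f1, f2)) (l # c) = None" using l' True by (simp add: dv_step_NS)
        moreover have "\<not> (l # c = conv2 u v \<and> (f2 \<longrightarrow> v = []))" for u v
          using l' True by (cases u; cases v) auto
        ultimately show ?thesis by blast
      next
        case False
        have e: "foldl dv (Some (f1, f2)) (l # c) = foldl dv (Some (True, f2)) c"
          using l' False by (simp add: dv_step_NS)
        have "(\<exists>u v. c = conv2 u v \<and> (True \<longrightarrow> u = []) \<and> (f2 \<longrightarrow> v = [])) \<longleftrightarrow>
              (\<exists>u v. l # c = conv2 u v \<and> (f1 \<longrightarrow> u = []) \<and> (f2 \<longrightarrow> v = []))"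
        proof
          assume "\<exists>u v. c = conv2 u v \<and> (True \<longrightarrow> u = []) \<and> (f2 \<longrightarrow> v = [])"
          then obtain v where "c = conv2 [] v" by blast
          then have "l # c = conv2 [] (b # v)" using l' by simp
          then show "\<exists>u v. l # c = conv2 u v \<and> (f1 \<longrightarrow> u = []) \<and> (f2 \<longrightarrow> v = [])"
            using False by blast
        next
          assume "\<exists>u v. l # c = conv2 u v \<and> (f1 \<longrightarrow> u = []) \<and> (f2 \<longrightarrow> v = [])"
          then obtain u v where uv: "l # c = conv2 u v" by blast
          then have "u = []" using l' by (cases u; cases v) auto
          then obtain v' where "c = conv2 [] v'" using uv l' by (cases v) auto
          then show "\<exists>u v. c = conv2 u v \<and> (True \<longrightarrow> u = []) \<and> (f2 \<longrightarrow> v = [])"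
            using False by blast
        qed
        then show ?thesis using e Cons.IH[of True f2] by simp
      qed
    qed
  next
    case (Some a)
    note xS = Some
    show ?thesis
    proof (cases y)
      case None
      have l': "l = (Some a, None)" using l xS None by simp
      show ?thesis
      proof (cases f1)
        case True
        have "foldl dv (Some (f1, f2)) (l # c) = None" using l' True by (simp add: dv_step_SN)
        moreover have "\<not> (l # c = conv2 u v \<and> (f1 \<longrightarrow> u = []))" for u v
          using l' True by (cases u; cases v) auto
        ultimately show ?thesis by blast
      next
        case False
        have e: "foldl dv (Some (f1, f2)) (l # c) = foldl dv (Some (f1, True)) c"
          using l' False by (simp add: dv_step_SN)
        have "(\<exists>u v. c = conv2 u v \<and> (f1 \<longrightarrow> u = []) \<and> (True \<longrightarrow> v = [])) \<longleftrightarrow>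
              (\<exists>u v. l # c = conv2 u v \<and> (f1 \<longrightarrow> u = []) \<and> (f2 \<longrightarrow> v = []))"
        proof
          assume "\<exists>u v. c = conv2 u v \<and> (f1 \<longrightarrow> u = []) \<and> (True \<longrightarrow> v = [])"
          then obtain u where "c = conv2 u []" by blast
          then have "l # c = conv2 (a # u) []" using l' by simp
          then show "\<exists>u v. l # c = conv2 u v \<and> (f1 \<longrightarrow> u = []) \<and> (f2 \<longrightarrow> v = [])"
            using False by blast
        next
          assume "\<exists>u v. l # c = conv2 u v \<and> (f1 \<longrightarrow> u = []) \<and> (f2 \<longrightarrow> v = [])"
          then obtain u v where uv: "l # c = conv2 u v" by blast
          then have "v = []" using l' by (cases u; cases v) auto
          then obtain u' where "c = conv2 u' []" using uv l' by (cases u) auto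
          then show "\<exists>u v. c = conv2 u v \<and> (f1 \<longrightarrow> u = []) \<and> (True \<longrightarrow> v = [])"
            using False by blast
        qed
        then show ?thesis using e Cons.IH[of f1 True] by simp
      qed
    next
      case (Some b)
      have l': "l = (Some a, Some b)" using l xS Some by simp
      show ?thesis
      proof (cases "f1 \<or> f2")
        case True
        have "foldl dv (Some (f1, f2)) (l # c) = None" using l' True by (simp add: dv_step_SS)
        moreover have "\<not> (l # c = conv2 u v \<and> (f1 \<longrightarrow> u = []) \<and> (f2 \<longrightarrow> v = []))" for u v
          using l' True by (cases u; cases v) auto
        ultimately show ?thesis by blast
      next
        case False
        have e: "foldl dv (Some (f1, f2)) (l # c) = foldl dv (Some (f1, f2)) c"
          using l' False by (simp add: dv_step_SS)
        have "(\<exists>u v. c = conv2 u v \<and> (f1 \<longrightarrow> u = []) \<and> (f2 \<longrightarrow> v = [])) \<longleftrightarrow>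
              (\<exists>u v. l # c = conv2 u v \<and> (f1 \<longrightarrow> u = []) \<and> (f2 \<longrightarrow> v = []))"
        proof
          assume "\<exists>u v. c = conv2 u v \<and> (f1 \<longrightarrow> u = []) \<and> (f2 \<longrightarrow> v = [])"
          then obtain u v where "c = conv2 u v" by blast
          then have "l # c = conv2 (a # u) (b # v)" using l' by simp
          then show "\<exists>u v. l # c = conv2 u v \<and> (f1 \<longrightarrow> u = []) \<and> (f2 \<longrightarrow> v = [])"
            using False by blast
        next
          assume "\<exists>u v. l # c = conv2 u v \<and> (f1 \<longrightarrow> u = []) \<and> (f2 \<longrightarrow> v = [])"
          then obtain u v where uv: "l # c = conv2 u v" by blast
          then obtain u' v' where "c = conv2 u' v'" using l' by (cases u; cases v) auto
          then show "\<exists>u v. c = conv2 u v \<and> (f1 \<longrightarrow> u = []) \<and> (f2 \<longrightarrow> v = [])"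
            using False by blast
        qed
        then show ?thesis using e Cons.IH[of f1 f2] by simp
      qed
    qed
  qed
qed

lemma fa_valid: "fa_recognizable {conv2 u v | u v. True}"
proof (rule dfa_fa[where Q="UNIV" and \<delta>=dv and s="Some (False, False)" and F="UNIV - {None}"])
  show "{conv2 u v |u v. True} = {w. foldl dv (Some (False, False)) w \<in> UNIV - {None}}"
  proof -
    have *: "c \<in> {conv2 u v |u v. True} \<longleftrightarrow> c \<in> {w. foldl dv (Some (False, False)) w \<in> UNIV - {None}}" for c
    proof -
      have "c \<in> {conv2 u v |u v. True} \<longleftrightarrow> (\<exists>u v. c = conv2 u v)" by blast
      also have "\<dots> \<longleftrightarrow> foldl dv (Some (False, False)) c \<noteq> None" using dv_run[of False False c] by simp
      also have "\<dots> \<longleftrightarrow> c \<in> {w. foldl dv (Some (False, False)) w \<in> UNIV - {None}}" by simp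
      finally show ?thesis .
    qed
    show ?thesis by (rule set_eqI) (rule *)
  qed
qed auto




fun lexcmp :: "int list \<Rightarrow> int list \<Rightarrow> int" where
  "lexcmp (a#u) (b#w) = (if a = b then lexcmp u w else sgn (a - b))"
| "lexcmp _ _ = 0"

lemma lexcmp_ex: "length u = length w \<Longrightarrow>
  (\<exists>k<length u. take k u = take k w \<and> u ! k < w ! k) \<longleftrightarrow> lexcmp u w = -1"
proof (induction u arbitrary: w)
  case Nil
  then show ?case by simp
next
  case (Cons a u)
  then obtain b w' where w: "w = b # w'" and len: "length u = length w'" by (cases w) auto
  have "(\<exists>k<length (a#u). take k (a#u) = take k w \<and> (a#u) ! k < w ! k) \<longleftrightarrow>
        (a < b \<or> (a = b \<and> (\<exists>k<length u. take k u = take k w' \<and> u ! k < w' ! k)))"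
    (is "?L \<longleftrightarrow> ?R")
  proof
    assume ?L
    then obtain k where k: "k < length (a#u)" "take k (a#u) = take k w" "(a#u) ! k < w ! k" by blast
    show ?R
    proof (cases k)
      case 0
      then show ?thesis using k w by simp
    next
      case (Suc k')
      then show ?thesis using k w by auto
    qed
  next
    assume ?R
    then show ?L
    proof
      assume "a < b" then show ?L using w by (intro exI[of _ 0]) auto
    next
      assume "a = b \<and> (\<exists>k<length u. take k u = take k w' \<and> u ! k < w' ! k)"
      then obtain k where "a = b" "k < length u" "take k u = take k w'" "u ! k < w' ! k" by blast
      then show ?L using w by (intro exI[of _ "Suc k"]) auto
    qed
  qed
  also have "\<dots> \<longleftrightarrow> lexcmp (a#u) w = -1"
    using Cons.IH[OF len] w by (auto simp: sgn_if)
  finally show ?case .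
qed

lemma llex_char: "llex_less u w \<longleftrightarrow> length u < length w \<or> (length u = length w \<and> lexcmp u w = -1)"
  unfolding llex_less_def using lexcmp_ex by blast

lemma lexcmp_range: "lexcmp u w \<in> {-1,0,1}"
  by (induction u w rule: lexcmp.induct) (auto simp: sgn_if)

lemma lexcmp_refl[simp]: "lexcmp u u = 0"
  by (induction u) auto

lemma lexcmp_sym: "lexcmp w u = - lexcmp u w"
  by (induction u w rule: lexcmp.induct) (auto simp: sgn_if)

lemma lexcmp_eq: "length u = length w \<Longrightarrow> lexcmp u w = 0 \<Longrightarrow> u = w"
  by (induction u w rule: lexcmp.induct) (auto simp: sgn_if split: if_splits)

lemma lexcmp_trans: "lexcmp u v = -1 \<Longrightarrow> lexcmp v w = -1 \<Longrightarrow> length v = length w \<Longrightarrow> lexcmp u w = -1"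
proof (induction u arbitrary: v w)
  case Nil
  then show ?case by simp
next
  case (Cons a u)
  then obtain b v' where v: "v = b # v'" by (cases v) auto
  with Cons obtain c w' where w: "w = c # w'" by (cases w) auto
  show ?case using Cons.prems Cons.IH[of v' w'] v w by (auto simp: sgn_if split: if_splits)
qed

lemma llex_irrefl: "\<not> llex_less u u"
  by (simp add: llex_char)

lemma llex_trans: "llex_less u v \<Longrightarrow> llex_less v w \<Longrightarrow> llex_less u w"
  unfolding llex_char by (elim disjE conjE) (auto intro: lexcmp_trans)

lemma llex_total: "u \<noteq> w \<Longrightarrow> llex_less u w \<or> llex_less w u"
  unfolding llex_char
  by (cases rule: linorder_cases[of "length u" "length w"]) (use lexcmp_range[of u w] lexcmp_sym[of w u] lexcmp_eq[of u w] in auto)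

definition dl :: "int \<times> bool \<times> bool \<Rightarrow> int option \<times> int option \<Rightarrow> int \<times> bool \<times> bool" where
  "dl st l = (case st of (cm, f1, f2) \<Rightarrow> case l of (x, y) \<Rightarrow>
     (if cm \<noteq> 0 then cm else (case (x, y) of (Some a, Some b) \<Rightarrow> sgn (a - b) | _ \<Rightarrow> 0),
      f1 \<or> x = None, f2 \<or> y = None))"

lemma dl_run: "foldl dl (cm, f1, f2) (conv2 u w) =
   (if cm \<noteq> 0 then cm else lexcmp u w, f1 \<or> length u < length w, f2 \<or> length w < length u)"
  by (induction u w arbitrary: cm f1 f2 rule: cv.induct) (auto simp: dl_def sgn_if)

lemma fa_llex: "fa_recognizable {conv2 u w | u w. llex_less u w}"
proof -
  define F where "F = {(cm::int, f1, f2). ((f1 \<and> \<not> f2) \<or> (\<not> f1 \<and> \<not> f2 \<and> cm = -1)) \<and> cm \<in> {-1,0,1}}"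
  have "fa_recognizable {w. foldl dl (0, False, False) w \<in> F}"
  proof (rule dfa_fa[where Q="{-1,0,1} \<times> UNIV" and \<delta>=dl and s="(0, False, False)" and F=F])
    show "\<forall>st\<in>{-1, 0, 1} \<times> UNIV. \<forall>a. dl st a \<in> {-1, 0, 1} \<times> UNIV"
      by (auto simp: dl_def sgn_if split: option.splits)
  qed (auto simp: F_def)
  then have "fa_recognizable ({conv2 u v | u v. True} \<inter> {w. foldl dl (0, False, False) w \<in> F})"
    using fa_valid fa_inter by blast
  moreover have "{conv2 u v | u v. True} \<inter> {w. foldl dl (0, False, False) w \<in> F} = {conv2 u w | u w. llex_less u w}"
  proof (intro set_eqI iffI)
    fix c assume "c \<in> {conv2 u v | u v. True} \<inter> {w. foldl dl (0, False, False) w \<in> F}"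
    then obtain u w where c: "c = conv2 u w" and "foldl dl (0, False, False) (conv2 u w) \<in> F" by blast
    then have "llex_less u w" by (auto simp: dl_run F_def llex_char)
    then show "c \<in> {conv2 u w | u w. llex_less u w}" using c by blast
  next
    fix c assume "c \<in> {conv2 u w | u w. llex_less u w}"
    then obtain u w where c: "c = conv2 u w" and "llex_less u w" by blast
    then have "foldl dl (0, False, False) (conv2 u w) \<in> F" using lexcmp_range[of u w] by (auto simp: dl_run F_def llex_char)
    then show "c \<in> {conv2 u v | u v. True} \<inter> {w. foldl dl (0, False, False) w \<in> F}" using c by blast
  qed
  ultimately show ?thesis by simp
qed

lemma fa_lift1:
  fixes D :: "'a list set"
  assumes "fa_recognizable D"
  shows "fa_recognizable {c :: ('a option \<times> 'b) list. opts (map fst c) \<in> D}"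
proof -
  obtain Q1 :: "nat set" and d1 s1 F1 where A: "finite Q1" "s1 \<in> Q1" "F1 \<subseteq> Q1" "\<forall>st\<in>Q1. \<forall>a. d1 st a \<in> Q1"
    "D = {w. foldl d1 s1 w \<in> F1}" using assms(1) by (rule fa_dest)
  define d where "d = (\<lambda>st (l :: 'a option \<times> 'b). case fst l of None \<Rightarrow> st | Some a \<Rightarrow> d1 st a)"
  have run: "foldl d st c = foldl d1 st (opts (map fst c))" for st c
  proof (induction c arbitrary: st)
    case (Cons l c)
    obtain x y where l: "l = (x, y)" by force
    show ?case using Cons[of "d st l"] by (cases "fst l") (auto simp: d_def l)
  qed simp
  show ?thesis
  proof (rule dfa_fa[where Q=Q1 and \<delta>=d and s=s1 and F=F1])
    show "{c. opts (map fst c) \<in> D} = {w. foldl d s1 w \<in> F1}" by (simp add: run A(5))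
    show "\<forall>st\<in>Q1. \<forall>a. d st a \<in> Q1" using A(4) unfolding d_def by (simp split: option.split)
  qed (use A in auto)
qed

lemma fa_lift2:
  fixes D :: "'a list set"
  assumes "fa_recognizable D"
  shows "fa_recognizable {c :: ('b \<times> 'a option) list. opts (map snd c) \<in> D}"
proof -
  obtain Q1 :: "nat set" and d1 s1 F1 where A: "finite Q1" "s1 \<in> Q1" "F1 \<subseteq> Q1" "\<forall>st\<in>Q1. \<forall>a. d1 st a \<in> Q1"
    "D = {w. foldl d1 s1 w \<in> F1}" using assms(1) by (rule fa_dest)
  define d where "d = (\<lambda>st (l :: 'b \<times> 'a option). case snd l of None \<Rightarrow> st | Some a \<Rightarrow> d1 st a)"
  have run: "foldl d st c = foldl d1 st (opts (map snd c))" for st c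
  proof (induction c arbitrary: st)
    case (Cons l c)
    obtain x y where l: "l = (x, y)" by force
    show ?case using Cons[of "d st l"] by (cases "snd l") (auto simp: d_def l)
  qed simp
  show ?thesis
  proof (rule dfa_fa[where Q=Q1 and \<delta>=d and s=s1 and F=F1])
    show "{c. opts (map snd c) \<in> D} = {w. foldl d s1 w \<in> F1}" by (simp add: run A(5))
    show "\<forall>st\<in>Q1. \<forall>a. d st a \<in> Q1" using A(4) unfolding d_def by (simp split: option.split)
  qed (use A in auto)
qed

lemma fa_alpha: "fa_recognizable {w. set w \<subseteq> S}"
proof -
  define d where "d = (\<lambda>b a. b \<and> a \<in> S)"
  have r0: "foldl d b w = (b \<and> set w \<subseteq> S)" for w b by (induction w arbitrary: b) (auto simp: d_def)
  have r: "foldl d True w = (set w \<subseteq> S)" for w by (simp add: r0)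
  show ?thesis by (rule dfa_fa[where Q=UNIV and \<delta>=d and s=True and F="{True}"]) (auto simp: r)
qed




definition valo :: "int option \<Rightarrow> int" where
  "valo x = (case x of None \<Rightarrow> 0 | Some a \<Rightarrow> a)"

definition okl :: "int \<Rightarrow> int option \<Rightarrow> bool" where
  "okl q x = (case x of None \<Rightarrow> True | Some a \<Rightarrow> a \<in> Sigma q)"

definition sS :: "int poly \<Rightarrow> int poly \<Rightarrow> int \<Rightarrow> int \<Rightarrow> int poly" where
  "sS g R u v = R + [:v:] - smult u g"

definition stepR :: "int \<Rightarrow> int \<Rightarrow> int poly \<Rightarrow> int poly \<Rightarrow> int \<Rightarrow> int \<Rightarrow> int poly" where
  "stepR p q g R u v = poly_shift 1 (sS g R u v - smult (- (coeff (sS g R u v) 0 div q)) (tpoly p q))"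

definition dc :: "int \<Rightarrow> int \<Rightarrow> int poly \<Rightarrow> int poly option \<Rightarrow> int option \<times> int option \<Rightarrow> int poly option" where
  "dc p q g st l = (case st of None \<Rightarrow> None | Some R \<Rightarrow> (case l of (x, y) \<Rightarrow>
     if okl q x \<and> okl q y \<and> q dvd coeff (sS g R (valo x) (valo y)) 0
     then Some (stepR p q g R (valo x) (valo y)) else None))"

lemma dc_step: "dc p q g (Some R) (x, y) = (if okl q x \<and> okl q y \<and> q dvd coeff (sS g R (valo x) (valo y)) 0
     then Some (stepR p q g R (valo x) (valo y)) else None)"
  by (simp add: dc_def)

lemma dc_None[simp]: "foldl (dc p q g) None c = None"
  by (induction c) (auto simp: dc_def)

lemma pCons0_shift: "coeff P 0 = 0 \<Longrightarrow> P = pCons 0 (poly_shift 1 P)"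
  by (rule poly_eqI) (simp add: coeff_pCons coeff_poly_shift split: nat.split)

lemma coeff_tpoly0[simp]: "coeff (tpoly p q) 0 = - q"
  by (simp add: tpoly_def)

lemma dvd_pCons0:
  assumes "q \<noteq> 0"
  shows "tpoly p q dvd pCons 0 Z \<longleftrightarrow> tpoly p q dvd Z"
proof
  assume "tpoly p q dvd pCons 0 Z"
  then obtain D where D: "pCons 0 Z = tpoly p q * D" by (auto elim: dvdE)
  have "coeff (pCons 0 Z) 0 = coeff (tpoly p q * D) 0" using D by simp
  then have "- q * coeff D 0 = 0" by (simp add: coeff_mult_0)
  then have "coeff D 0 = 0" using assms by simp
  then have "D = pCons 0 (poly_shift 1 D)" by (rule pCons0_shift)
  then have "pCons 0 Z = pCons 0 (tpoly p q * poly_shift 1 D)"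
    using D by (metis add_0 mult_pCons_right smult_0_left)
  then show "tpoly p q dvd Z" by simp
next
  assume "tpoly p q dvd Z"
  moreover have "pCons 0 Z = [:0, 1:] * Z" by simp
  ultimately show "tpoly p q dvd pCons 0 Z" by (metis dvd_mult)
qed

lemma expand_step:
  "R + pCons v V - g * pCons u U = sS g R u v + pCons 0 (V - g * U)"
  by (rule poly_eqI) (simp add: sS_def coeff_pCons split: nat.split)

lemma dc_sem:
  assumes q0: "q \<noteq> 0"
  shows "(\<exists>R'. foldl (dc p q g) (Some R) c = Some R' \<and> tpoly p q dvd R') \<longleftrightarrow>
    (\<forall>l\<in>set c. okl q (fst l) \<and> okl q (snd l)) \<and>
    tpoly p q dvd (R + Poly (map (valo \<circ> snd) c) - g * Poly (map (valo \<circ> fst) c))"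
proof (induction c arbitrary: R)
  case Nil
  then show ?case by simp
next
  case (Cons l c)
  obtain x y where l: "l = (x, y)" by force
  define u where "u = valo x"
  define v where "v = valo y"
  define S where "S = sS g R u v"
  define Z where "Z = Poly (map (valo \<circ> snd) c) - g * Poly (map (valo \<circ> fst) c)"
  have tot: "R + Poly (map (valo \<circ> snd) (l # c)) - g * Poly (map (valo \<circ> fst) (l # c)) = S + pCons 0 Z"
    using expand_step[of R v _ g u] by (simp add: l u_def v_def S_def Z_def)
  show ?case
  proof (cases "okl q x \<and> okl q y")
    case False
    then have "foldl (dc p q g) (Some R) (l # c) = None" by (auto simp: l dc_step)
    then show ?thesis using False by (auto simp: l)
  next
    case ok: True
    show ?thesis
    proof (cases "q dvd coeff S 0")
      case False
      have "\<not> tpoly p q dvd (S + pCons 0 Z)"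
      proof
        assume "tpoly p q dvd (S + pCons 0 Z)"
        then obtain D where D: "S + pCons 0 Z = tpoly p q * D" by (auto elim: dvdE)
        have "coeff (S + pCons 0 Z) 0 = coeff (tpoly p q * D) 0" using D by simp
        then have "coeff S 0 = - q * coeff D 0" by (simp add: coeff_mult_0)
        then show False using False by simp
      qed
      moreover have "foldl (dc p q g) (Some R) (l # c) = None"
        using False ok by (simp add: l dc_step S_def u_def v_def)
      ultimately show ?thesis unfolding tot by simp
    next
      case True
      define h where "h = - (coeff S 0 div q)"
      define R1 where "R1 = stepR p q g R u v"
      have "coeff (S - smult h (tpoly p q)) 0 = 0" using True by (simp add: h_def)
      then have SR: "S = smult h (tpoly p q) + pCons 0 R1"
        using pCons0_shift[of "S - smult h (tpoly p q)"]
        by (simp add: R1_def stepR_def S_def h_def algebra_simps)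
      have step: "foldl (dc p q g) (Some R) (l # c) = foldl (dc p q g) (Some R1) c"
        using ok True by (simp add: l dc_step R1_def S_def u_def v_def)
      have "tpoly p q dvd (S + pCons 0 Z) \<longleftrightarrow> tpoly p q dvd pCons 0 (R1 + Z)"
      proof -
        have e1: "S + pCons 0 Z = pCons 0 (R1 + Z) + smult h (tpoly p q)" using SR by simp
        have "tpoly p q dvd smult h (tpoly p q)" by (rule dvd_smult) simp
        then show ?thesis unfolding e1 by (rule dvd_add_left_iff)
      qed
      also have "\<dots> \<longleftrightarrow> tpoly p q dvd (R1 + Z)" using dvd_pCons0[OF q0] .
      finally have e: "tpoly p q dvd (S + pCons 0 Z) \<longleftrightarrow> tpoly p q dvd (R1 + Z)" .
      have z: "R1 + Poly (map (valo \<circ> snd) c) - g * Poly (map (valo \<circ> fst) c) = R1 + Z"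
        by (simp add: Z_def)
      have "(\<exists>R'. foldl (dc p q g) (Some R) (l # c) = Some R' \<and> tpoly p q dvd R') \<longleftrightarrow>
            (\<exists>R'. foldl (dc p q g) (Some R1) c = Some R' \<and> tpoly p q dvd R')" by (simp only: step)
      also have "\<dots> \<longleftrightarrow> (\<forall>l\<in>set c. okl q (fst l) \<and> okl q (snd l)) \<and> tpoly p q dvd (R1 + Z)"
        using Cons.IH[of R1] unfolding z .
      also have "\<dots> \<longleftrightarrow> (\<forall>l\<in>set (l # c). okl q (fst l) \<and> okl q (snd l)) \<and> tpoly p q dvd (S + pCons 0 Z)"
        using e ok by (simp add: l)
      finally show ?thesis unfolding tot .
    qed
  qed
qed




definition Tg :: "int \<Rightarrow> int poly \<Rightarrow> nat \<Rightarrow> int" where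
  "Tg q g i = (\<bar>q\<bar> - 1) * (\<Sum>j\<in>{Suc i..degree g}. \<bar>coeff g j\<bar>)"

definition Hb :: "int \<Rightarrow> int poly \<Rightarrow> int" where
  "Hb q g = Tg q g 0 + (\<bar>q\<bar> - 1) + (\<bar>q\<bar> - 1) * \<bar>coeff g 0\<bar>"

definition Kb :: "int \<Rightarrow> int \<Rightarrow> int poly \<Rightarrow> nat \<Rightarrow> int" where
  "Kb p q g i = Tg q g i + (if i = 0 then (1 + \<bar>p\<bar>) * Hb q g else if i = 1 then Hb q g else 0)"

definition Bx :: "int \<Rightarrow> int \<Rightarrow> int poly \<Rightarrow> int poly set" where
  "Bx p q g = {R. \<forall>i. \<bar>coeff R i\<bar> \<le> Kb p q g i}"

lemma Tg_step: "Tg q g i = Tg q g (Suc i) + (\<bar>q\<bar> - 1) * \<bar>coeff g (Suc i)\<bar>"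
proof (cases "Suc i \<le> degree g")
  case True
  then show ?thesis unfolding Tg_def by (simp add: sum.atLeast_Suc_atMost algebra_simps)
next
  case False
  then have "coeff g (Suc i) = 0" by (simp add: coeff_eq_0)
  then show ?thesis using False unfolding Tg_def by simp
qed

lemma Tg_nonneg: "\<bar>q\<bar> \<ge> 1 \<Longrightarrow> Tg q g i \<ge> 0"
  unfolding Tg_def by (intro mult_nonneg_nonneg sum_nonneg) auto

lemma Tg_zero: "i \<ge> degree g \<Longrightarrow> Tg q g i = 0"
  unfolding Tg_def by simp

lemma Tg_le0: "\<bar>q\<bar> \<ge> 1 \<Longrightarrow> Tg q g i \<le> Tg q g 0"
  unfolding Tg_def by (intro mult_left_mono sum_mono2) auto

lemma Hb_nonneg: "\<bar>q\<bar> \<ge> 1 \<Longrightarrow> Hb q g \<ge> 0"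
  unfolding Hb_def using Tg_nonneg[of q g 0] by (simp add: mult_nonneg_nonneg)

lemma Kb_nonneg: "\<bar>q\<bar> \<ge> 1 \<Longrightarrow> Kb p q g i \<ge> 0"
  unfolding Kb_def using Tg_nonneg[of q g i] Hb_nonneg[of q g] by (simp add: mult_nonneg_nonneg)

lemma Kb_le0: "\<bar>q\<bar> \<ge> 1 \<Longrightarrow> Kb p q g i \<le> Kb p q g 0"
proof -
  assume q: "\<bar>q\<bar> \<ge> 1"
  have "Hb q g \<le> (1 + \<bar>p\<bar>) * Hb q g" using Hb_nonneg[OF q, of g]
    by (simp add: mult_le_cancel_right1 mult_nonneg_nonneg)
  then show ?thesis unfolding Kb_def using Tg_le0[OF q, of g i] Hb_nonneg[OF q, of g]
    by (auto simp: mult_nonneg_nonneg)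
qed

lemma Kb_zero: "i \<ge> degree g + 2 \<Longrightarrow> Kb p q g i = 0"
  unfolding Kb_def by (simp add: Tg_zero)

lemma coeff_tpoly_Suc: "coeff (tpoly p q) (Suc i) = (if i = 0 then p else if i = 1 then 1 else 0)"
  by (cases i) (auto simp: tpoly_def coeff_pCons split: nat.split)

lemma abs_mult_le: "\<bar>a\<bar> \<le> (A::int) \<Longrightarrow> \<bar>a * b\<bar> \<le> A * \<bar>b\<bar>"
  by (simp add: abs_mult mult_right_mono)

lemma Kb_rec: "Kb p q g (Suc i) + (\<bar>q\<bar> - 1) * \<bar>coeff g (Suc i)\<bar> + Hb q g * \<bar>coeff (tpoly p q) (Suc i)\<bar> = Kb p q g i"
proof -
  have ts: "Tg q g i = Tg q g (Suc i) + (\<bar>q\<bar> - 1) * \<bar>coeff g (Suc i)\<bar>" by (rule Tg_step)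
  consider "i = 0" | "i = Suc 0" | k where "i = Suc (Suc k)" by (metis not0_implies_Suc)
  then show ?thesis
  proof cases
    case 1
    have "Kb p q g (Suc i) = Tg q g (Suc i) + Hb q g" using 1 by (simp add: Kb_def)
    moreover have "Kb p q g i = Tg q g i + (1 + \<bar>p\<bar>) * Hb q g" using 1 by (simp add: Kb_def)
    moreover have "\<bar>coeff (tpoly p q) (Suc i)\<bar> = \<bar>p\<bar>" using 1 by (simp add: coeff_tpoly_Suc)
    ultimately show ?thesis using ts by (simp add: algebra_simps)
  next
    case 2
    have "Kb p q g (Suc i) = Tg q g (Suc i)" using 2 by (simp add: Kb_def)
    moreover have "Kb p q g i = Tg q g i + Hb q g" using 2 by (simp add: Kb_def)
    moreover have "\<bar>coeff (tpoly p q) (Suc i)\<bar> = 1" using 2 by (simp add: coeff_tpoly_Suc)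
    ultimately show ?thesis using ts by (simp add: algebra_simps)
  next
    case 3
    have "Kb p q g (Suc i) = Tg q g (Suc i)" using 3 by (simp add: Kb_def)
    moreover have "Kb p q g i = Tg q g i" using 3 by (simp add: Kb_def)
    moreover have "\<bar>coeff (tpoly p q) (Suc i)\<bar> = 0" using 3 by (simp add: coeff_tpoly_Suc)
    ultimately show ?thesis using ts by (simp add: algebra_simps)
  qed
qed

lemma stepR_Bx:
  assumes pq: "1 + \<bar>p\<bar> < \<bar>q\<bar>" and R: "R \<in> Bx p q g" and u: "\<bar>u\<bar> \<le> \<bar>q\<bar> - 1" and v: "\<bar>v\<bar> \<le> \<bar>q\<bar> - 1"
    and dv: "q dvd coeff (sS g R u v) 0"
  shows "stepR p q g R u v \<in> Bx p q g"
proof -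
  define A where "A = \<bar>q\<bar> - 1"
  define S where "S = sS g R u v"
  define h where "h = - (coeff S 0 div q)"
  define H where "H = Hb q g"
  have q1: "\<bar>q\<bar> \<ge> 1" using pq by simp
  have RK: "\<bar>coeff R i\<bar> \<le> Kb p q g i" for i using R by (simp add: Bx_def)
  have S0: "coeff S 0 = coeff R 0 + v - u * coeff g 0" by (simp add: S_def sS_def)
  have SS: "coeff S (Suc i) = coeff R (Suc i) - u * coeff g (Suc i)" for i by (simp add: S_def sS_def)
  have "coeff S 0 = - h * q" using dv by (simp add: h_def S_def)
  then have hq: "\<bar>h\<bar> * \<bar>q\<bar> = \<bar>coeff S 0\<bar>" by (simp add: abs_mult)
  have "\<bar>coeff S 0\<bar> \<le> \<bar>coeff R 0\<bar> + \<bar>v\<bar> + \<bar>u * coeff g 0\<bar>" unfolding S0 by linarith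
  also have "\<dots> \<le> Kb p q g 0 + A + A * \<bar>coeff g 0\<bar>"
    using RK[of 0] v abs_mult_le[OF u, of "coeff g 0"] by (simp add: A_def)
  also have "\<dots> = (2 + \<bar>p\<bar>) * H" by (simp add: Kb_def H_def Hb_def A_def algebra_simps)
  also have "\<dots> \<le> \<bar>q\<bar> * H" using pq Hb_nonneg[OF q1, of g] by (intro mult_right_mono) (auto simp: H_def)
  finally have "\<bar>h\<bar> * \<bar>q\<bar> \<le> \<bar>q\<bar> * H" using hq by simp
  then have "\<bar>h\<bar> * \<bar>q\<bar> \<le> H * \<bar>q\<bar>" by (simp add: mult.commute)
  then have hH: "\<bar>h\<bar> \<le> H" by (rule mult_right_le_imp_le[of _ "\<bar>q\<bar>"]) (use q1 in auto)
  have "\<bar>coeff (stepR p q g R u v) i\<bar> \<le> Kb p q g i" for i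
  proof -
    have "stepR p q g R u v = poly_shift 1 (S - smult h (tpoly p q))"
      unfolding stepR_def S_def h_def ..
    then have "coeff (stepR p q g R u v) i = coeff (S - smult h (tpoly p q)) (Suc i)"
      by (simp only: coeff_poly_shift Suc_eq_plus1)
    also have "\<dots> = coeff S (Suc i) - h * coeff (tpoly p q) (Suc i)" by simp
    finally have c: "coeff (stepR p q g R u v) i = coeff R (Suc i) - u * coeff g (Suc i) - h * coeff (tpoly p q) (Suc i)"
      by (simp only: SS)
    have b1: "\<bar>u * coeff g (Suc i)\<bar> \<le> A * \<bar>coeff g (Suc i)\<bar>" using abs_mult_le[OF u] by (simp add: A_def)
    have b2: "\<bar>h * coeff (tpoly p q) (Suc i)\<bar> \<le> H * \<bar>coeff (tpoly p q) (Suc i)\<bar>" using abs_mult_le[OF hH] .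
    have "\<bar>coeff (stepR p q g R u v) i\<bar> \<le> Kb p q g (Suc i) + A * \<bar>coeff g (Suc i)\<bar> + H * \<bar>coeff (tpoly p q) (Suc i)\<bar>"
      unfolding c using RK[of "Suc i"] b1 b2 by linarith
    also have "\<dots> = Kb p q g i" using Kb_rec[of p q g i] by (simp add: A_def H_def)
    finally show ?thesis .
  qed
  then show ?thesis unfolding Bx_def by blast
qed

lemma finite_Bx:
  assumes q1: "\<bar>q\<bar> \<ge> 1"
  shows "finite (Bx p q g)"
proof -
  define N where "N = degree g + 2"
  define M where "M = Kb p q g 0"
  have "Bx p q g \<subseteq> Poly ` {xs. set xs \<subseteq> {-M..M} \<and> length xs = N}"
  proof
    fix R assume R: "R \<in> Bx p q g"
    then have RK: "\<bar>coeff R i\<bar> \<le> Kb p q g i" for i by (simp add: Bx_def)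
    have z: "coeff R i = 0" if "i \<ge> N" for i using RK[of i] Kb_zero[of g i p q] that by (simp add: N_def)
    have eqR: "R = Poly (map (coeff R) [0..<N])"
      by (rule poly_eqI) (auto simp: nth_default_def z)
    have bnd: "\<bar>coeff R i\<bar> \<le> M" for i using RK[of i] Kb_le0[OF q1, of p g i] by (simp add: M_def)
    have st: "set (map (coeff R) [0..<N]) \<subseteq> {-M..M}"
    proof
      fix z assume "z \<in> set (map (coeff R) [0..<N])"
      then obtain i where "z = coeff R i" by auto
      then show "z \<in> {-M..M}" using bnd[of i] by (simp add: abs_le_iff)
    qed
    show "R \<in> Poly ` {xs. set xs \<subseteq> {-M..M} \<and> length xs = N}"
      by (rule image_eqI[where f=Poly and x="map (coeff R) [0..<N]", OF eqR]) (use st in simp)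
  qed
  moreover have "finite {xs. set xs \<subseteq> {-M..M} \<and> length xs = N}"
    by (rule finite_lists_length_eq) simp
  ultimately show ?thesis by (metis finite_surj)
qed

lemma zero_Bx: "\<bar>q\<bar> \<ge> 1 \<Longrightarrow> 0 \<in> Bx p q g"
  using Kb_nonneg by (simp add: Bx_def)

lemma okl_bound: "q \<noteq> 0 \<Longrightarrow> okl q x \<Longrightarrow> \<bar>valo x\<bar> \<le> \<bar>q\<bar> - 1"
  by (cases x) (auto simp: okl_def valo_def Sigma_def)

lemma fa_carry:
  assumes pq: "1 + \<bar>p\<bar> < \<bar>q\<bar>"
  shows "fa_recognizable {c. (\<forall>l\<in>set c. okl q (fst l) \<and> okl q (snd l)) \<and>
    tpoly p q dvd (Poly (map (valo \<circ> snd) c) - g * Poly (map (valo \<circ> fst) c))}"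
proof -
  have q1: "\<bar>q\<bar> \<ge> 1" and q0: "q \<noteq> 0" using pq by auto
  define Q where "Q = insert None (Some ` Bx p q g)"
  define F where "F = Some ` {R \<in> Bx p q g. tpoly p q dvd R}"
  have cl: "\<forall>st\<in>Q. \<forall>a. dc p q g st a \<in> Q"
  proof (intro ballI allI)
    fix st and a :: "int option \<times> int option" assume "st \<in> Q"
    obtain x y where a: "a = (x, y)" by force
    show "dc p q g st a \<in> Q"
    proof (cases st)
      case None then show ?thesis by (simp add: Q_def dc_def)
    next
      case (Some R)
      then have R: "R \<in> Bx p q g" using \<open>st \<in> Q\<close> by (auto simp: Q_def)
      show ?thesis using stepR_Bx[OF pq R okl_bound[OF q0] okl_bound[OF q0]] Some
        by (auto simp: a dc_step Q_def)
    qed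
  qed
  have sQ: "Some 0 \<in> Q" using zero_Bx[OF q1] by (simp add: Q_def)
  show ?thesis
  proof (rule dfa_fa[where Q=Q and \<delta>="dc p q g" and s="Some 0" and F=F])
    show "finite Q" using finite_Bx[OF q1] by (simp add: Q_def)
    show "F \<subseteq> Q" by (auto simp: F_def Q_def)
    show "{c. (\<forall>l\<in>set c. okl q (fst l) \<and> okl q (snd l)) \<and>
      tpoly p q dvd (Poly (map (valo \<circ> snd) c) - g * Poly (map (valo \<circ> fst) c))} =
      {w. foldl (dc p q g) (Some 0) w \<in> F}"
    proof (intro set_eqI)
      fix c
      have inQ: "foldl (dc p q g) (Some 0) c \<in> Q" using foldl_closed[OF cl sQ] .
      have "foldl (dc p q g) (Some 0) c \<in> F \<longleftrightarrow> (\<exists>R'. foldl (dc p q g) (Some 0) c = Some R' \<and> tpoly p q dvd R')"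
        using inQ by (auto simp: F_def Q_def)
      also have "\<dots> \<longleftrightarrow> (\<forall>l\<in>set c. okl q (fst l) \<and> okl q (snd l)) \<and>
          tpoly p q dvd (0 + Poly (map (valo \<circ> snd) c) - g * Poly (map (valo \<circ> fst) c))"
        by (rule dc_sem[OF q0])
      finally show "c \<in> {c. (\<forall>l\<in>set c. okl q (fst l) \<and> okl q (snd l)) \<and>
        tpoly p q dvd (Poly (map (valo \<circ> snd) c) - g * Poly (map (valo \<circ> fst) c))} \<longleftrightarrow>
        c \<in> {w. foldl (dc p q g) (Some 0) w \<in> F}" by simp
    qed
  qed (use cl sQ in auto)
qed

lemma ok_conv2: "(\<forall>l\<in>set (conv2 u v). okl q (fst l) \<and> okl q (snd l)) \<longleftrightarrow> set u \<subseteq> Sigma q \<and> set v \<subseteq> Sigma q"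
  by (induction u v rule: cv.induct) (auto simp: okl_def)

lemma Poly_fst_conv2: "Poly (map (valo \<circ> fst) (conv2 u v)) = Poly u"
  by (induction u v rule: cv.induct) (auto simp: valo_def)

lemma Poly_snd_conv2: "Poly (map (valo \<circ> snd) (conv2 u v)) = Poly v"
  by (induction u v rule: cv.induct) (auto simp: valo_def)

lemma fa_rel:
  assumes pq: "1 + \<bar>p\<bar> < \<bar>q\<bar>"
  shows "fa_recognizable {conv2 u v | u v. set u \<subseteq> Sigma q \<and> set v \<subseteq> Sigma q \<and> sim p q (strpoly v) (g * strpoly u)}"
proof -
  have "fa_recognizable ({conv2 u v | u v. True} \<inter> {c. (\<forall>l\<in>set c. okl q (fst l) \<and> okl q (snd l)) \<and>
    tpoly p q dvd (Poly (map (valo \<circ> snd) c) - g * Poly (map (valo \<circ> fst) c))})"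
    by (rule fa_inter[OF fa_valid fa_carry[OF pq]])
  moreover have "{conv2 u v | u v. True} \<inter> {c. (\<forall>l\<in>set c. okl q (fst l) \<and> okl q (snd l)) \<and>
    tpoly p q dvd (Poly (map (valo \<circ> snd) c) - g * Poly (map (valo \<circ> fst) c))} =
    {conv2 u v | u v. set u \<subseteq> Sigma q \<and> set v \<subseteq> Sigma q \<and> sim p q (strpoly v) (g * strpoly u)}"
  proof (intro set_eqI iffI)
    fix c assume "c \<in> {conv2 u v | u v. True} \<inter> {c. (\<forall>l\<in>set c. okl q (fst l) \<and> okl q (snd l)) \<and>
      tpoly p q dvd (Poly (map (valo \<circ> snd) c) - g * Poly (map (valo \<circ> fst) c))}"
    then obtain u v where c: "c = conv2 u v" and h: "(\<forall>l\<in>set (conv2 u v). okl q (fst l) \<and> okl q (snd l)) \<and>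
      tpoly p q dvd (Poly (map (valo \<circ> snd) (conv2 u v)) - g * Poly (map (valo \<circ> fst) (conv2 u v)))" by blast
    then have "set u \<subseteq> Sigma q \<and> set v \<subseteq> Sigma q \<and> sim p q (strpoly v) (g * strpoly u)"
      by (simp only: ok_conv2 Poly_fst_conv2 Poly_snd_conv2 sim_def strpoly_def)
    then show "c \<in> {conv2 u v | u v. set u \<subseteq> Sigma q \<and> set v \<subseteq> Sigma q \<and> sim p q (strpoly v) (g * strpoly u)}"
      using c by blast
  next
    fix c assume "c \<in> {conv2 u v | u v. set u \<subseteq> Sigma q \<and> set v \<subseteq> Sigma q \<and> sim p q (strpoly v) (g * strpoly u)}"
    then obtain u v where c: "c = conv2 u v" and h: "set u \<subseteq> Sigma q \<and> set v \<subseteq> Sigma q \<and> sim p q (strpoly v) (g * strpoly u)"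
      by blast
    then have "(\<forall>l\<in>set (conv2 u v). okl q (fst l) \<and> okl q (snd l)) \<and>
      tpoly p q dvd (Poly (map (valo \<circ> snd) (conv2 u v)) - g * Poly (map (valo \<circ> fst) (conv2 u v)))"
      by (simp only: ok_conv2 Poly_fst_conv2 Poly_snd_conv2 sim_def strpoly_def)
    then show "c \<in> {conv2 u v | u v. True} \<inter> {c. (\<forall>l\<in>set c. okl q (fst l) \<and> okl q (snd l)) \<and>
      tpoly p q dvd (Poly (map (valo \<circ> snd) c) - g * Poly (map (valo \<circ> fst) c))}"
      using c by blast
  qed
  ultimately show ?thesis by simp
qed




lemma sim_sym: "sim p q f g \<Longrightarrow> sim p q g f"
  unfolding sim_def by (metis dvd_minus_iff minus_diff_eq)

lemma sim_trans: "sim p q f g \<Longrightarrow> sim p q g h \<Longrightarrow> sim p q f h"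
  unfolding sim_def by (metis diff_add_cancel add_diff_eq dvd_add)

lemma sim_reduce: "\<exists>a b. sim p q G [:a, b:]"
proof (induction G rule: pCons_induct)
  case 0
  have "sim p q 0 [:0, 0:]" by (simp add: sim_def)
  then show ?case by blast
next
  case (pCons c G)
  then obtain a b where ab: "sim p q G [:a, b:]" by blast
  have "pCons c G - [:c + b * q, a - b * p:] = pCons 0 (G - [:a, b:]) + smult b (tpoly p q)"
    by (simp add: tpoly_def algebra_simps)
  moreover have "tpoly p q dvd pCons 0 (G - [:a, b:])"
  proof -
    have "pCons 0 (G - [:a, b:]) = [:0, 1:] * (G - [:a, b:])" by simp
    then show ?thesis using ab unfolding sim_def by (metis dvd_mult)
  qed
  moreover have "tpoly p q dvd smult b (tpoly p q)" by (rule dvd_smult) simp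
  ultimately have "sim p q (pCons c G) [:c + b * q, a - b * p:]" unfolding sim_def by simp
  then show ?case by blast
qed

lemma digit_pos:
  assumes "q \<noteq> 0" "(a::int) \<ge> 0"
  shows "\<exists>d m. a = d + q * m \<and> \<bar>d\<bar> \<le> \<bar>q\<bar> - 1 \<and> \<bar>q\<bar> * \<bar>m\<bar> \<le> \<bar>a\<bar>"
proof -
  define Q where "Q = \<bar>q\<bar>"
  have Q: "Q > 0" using assms by (simp add: Q_def)
  define k where "k = a div Q"
  define r where "r = a mod Q"
  have ar: "a = Q * k + r" by (simp add: k_def r_def)
  have r0: "0 \<le> r" "r < Q" using Q by (simp_all add: r_def)
  have k0: "k \<ge> 0" using assms(2) Q by (simp add: k_def pos_imp_zdiv_nonneg_iff)
  have "Q * k \<le> a" using ar r0 by simp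
  show ?thesis
  proof (cases "q > 0")
    case True
    then have "Q = q" by (simp add: Q_def)
    then show ?thesis using ar r0 k0 \<open>Q * k \<le> a\<close> assms
      by (intro exI[of _ r] exI[of _ k]) (auto simp: Q_def)
  next
    case False
    then have "Q = - q" using assms(1) by (simp add: Q_def)
    then show ?thesis using ar r0 k0 \<open>Q * k \<le> a\<close> assms
      by (intro exI[of _ r] exI[of _ "-k"]) (auto simp: Q_def)
  qed
qed

lemma digit:
  assumes "q \<noteq> 0"
  shows "\<exists>d m. (a::int) = d + q * m \<and> \<bar>d\<bar> \<le> \<bar>q\<bar> - 1 \<and> \<bar>q\<bar> * \<bar>m\<bar> \<le> \<bar>a\<bar>"
proof (cases "a \<ge> 0")
  case True
  then show ?thesis using digit_pos[OF assms] by blast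
next
  case False
  then obtain d m where "- a = d + q * m" "\<bar>d\<bar> \<le> \<bar>q\<bar> - 1" "\<bar>q\<bar> * \<bar>m\<bar> \<le> \<bar>- a\<bar>"
    using digit_pos[OF assms, of "-a"] by auto
  then show ?thesis by (intro exI[of _ "-d"] exI[of _ "-m"]) auto
qed

lemma rep_lin:
  assumes pq: "1 + \<bar>p\<bar> < \<bar>q\<bar>"
  shows "\<exists>w. set w \<subseteq> Sigma q \<and> sim p q (Poly w) [:a, b:]"
proof -
  define mu :: "int \<times> int \<Rightarrow> nat" where
    "mu = (\<lambda>(a, b). nat (2 * (\<bar>a\<bar> + 2 * \<bar>b\<bar>) + (if b = 0 then 1 else 0)))"
  have q0: "q \<noteq> 0" using pq by auto
  have "\<forall>a b. mu (a, b) = n \<longrightarrow> (\<exists>w. set w \<subseteq> Sigma q \<and> sim p q (Poly w) [:a, b:])" for n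
  proof (induction n rule: less_induct)
    case (less n)
    show ?case
    proof (intro allI impI)
      fix a b assume n: "mu (a, b) = n"
      show "\<exists>w. set w \<subseteq> Sigma q \<and> sim p q (Poly w) [:a, b:]"
      proof (cases "a = 0 \<and> b = 0")
        case True
        then have "sim p q (Poly []) [:a, b:]" by (simp add: sim_def)
        then show ?thesis by (intro exI[of _ "[]"]) simp
      next
        case nz: False
        obtain d m where dm: "a = d + q * m" "\<bar>d\<bar> \<le> \<bar>q\<bar> - 1" "\<bar>q\<bar> * \<bar>m\<bar> \<le> \<bar>a\<bar>"
          using digit[OF q0] by blast
        define a' where "a' = b + p * m"
        have pm: "\<bar>p * m\<bar> + 2 * \<bar>m\<bar> \<le> \<bar>q\<bar> * \<bar>m\<bar>"
        proof -
          have "\<bar>p * m\<bar> + 2 * \<bar>m\<bar> = (\<bar>p\<bar> + 2) * \<bar>m\<bar>" by (simp add: abs_mult algebra_simps)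
          also have "\<dots> \<le> \<bar>q\<bar> * \<bar>m\<bar>" using pq by (intro mult_right_mono) auto
          finally show ?thesis .
        qed
        have nu: "\<bar>a'\<bar> + 2 * \<bar>m\<bar> \<le> \<bar>a\<bar> + \<bar>b\<bar>" unfolding a'_def using pm dm(3) by linarith
        have ineq: "2 * (\<bar>a'\<bar> + 2 * \<bar>m\<bar>) + (if m = 0 then 1 else 0) < 2 * (\<bar>a\<bar> + 2 * \<bar>b\<bar>) + (if b = 0 then (1::int) else 0)"
        proof (cases "b = 0")
          case False
          then have "\<bar>b\<bar> \<ge> 1" by simp
          then show ?thesis using nu by auto
        next
          case True
          then have a0: "a \<noteq> 0" using nz by simp
          then have "\<bar>a\<bar> \<ge> 1" by simp
          show ?thesis
          proof (cases "m = 0")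
            case True
            then show ?thesis using \<open>b = 0\<close> \<open>\<bar>a\<bar> \<ge> 1\<close> by (simp add: a'_def)
          next
            case False
            then show ?thesis using nu \<open>b = 0\<close> by simp
          qed
        qed
        have "mu (a', m) < n" using n ineq by (auto simp: mu_def)
        then obtain w' where w': "set w' \<subseteq> Sigma q" "sim p q (Poly w') [:a', m:]"
          using less by blast
        have "pCons d (Poly w') - [:a, b:] = pCons 0 (Poly w' - [:a', m:]) + smult m (tpoly p q)"
          using dm(1) by (simp add: tpoly_def a'_def algebra_simps)
        moreover have "tpoly p q dvd pCons 0 (Poly w' - [:a', m:])"
        proof -
          have "pCons 0 (Poly w' - [:a', m:]) = [:0, 1:] * (Poly w' - [:a', m:])" by simp
          then show ?thesis using w'(2) unfolding sim_def by (metis dvd_mult)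
        qed
        moreover have "tpoly p q dvd smult m (tpoly p q)" by (rule dvd_smult) simp
        ultimately have "sim p q (Poly (d # w')) [:a, b:]" unfolding sim_def by simp
        moreover have "d \<in> Sigma q" using dm(2) by (auto simp: Sigma_def)
        ultimately show ?thesis using w'(1) by (intro exI[of _ "d # w'"]) auto
      qed
    qed
  qed
  then show ?thesis by blast
qed

lemma rep_ex:
  assumes pq: "1 + \<bar>p\<bar> < \<bar>q\<bar>"
  shows "\<exists>w. set w \<subseteq> Sigma q \<and> sim p q (strpoly w) G"
proof -
  obtain a b where "sim p q G [:a, b:]" using sim_reduce by blast
  moreover obtain w where "set w \<subseteq> Sigma q" "sim p q (Poly w) [:a, b:]" using rep_lin[OF pq] by blast
  ultimately show ?thesis unfolding strpoly_def by (meson sim_sym sim_trans)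
qed

lemma dom_ex:
  assumes pq: "1 + \<bar>p\<bar> < \<bar>q\<bar>"
  shows "\<exists>w. w \<in> Dom p q \<and> sim p q (strpoly w) G"
proof -
  obtain w0 where w0: "set w0 \<subseteq> Sigma q" "sim p q (strpoly w0) G" using rep_ex[OF pq] by blast
  define C where "C = {w. set w \<subseteq> Sigma q \<and> sim p q (strpoly w) G \<and> length w \<le> length w0}"
  define r where "r = {(u, w). u \<in> C \<and> w \<in> C \<and> llex_less u w}"
  have fC: "finite C"
  proof -
    have "C \<subseteq> {w. set w \<subseteq> Sigma q \<and> length w \<le> length w0}" by (auto simp: C_def)
    moreover have "finite {w. set w \<subseteq> Sigma q \<and> length w \<le> length w0}"
      by (rule finite_lists_length_le) (simp add: Sigma_def)
    ultimately show ?thesis by (rule finite_subset)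
  qed
  have "r \<subseteq> C \<times> C" by (auto simp: r_def)
  then have "finite r" using fC by (metis finite_SigmaI finite_subset)
  moreover have "trans r" unfolding trans_def r_def using llex_trans by blast
  then have "r\<^sup>+ = r" by (rule trancl_id)
  then have "acyclic r" unfolding acyclic_def r_def using llex_irrefl by auto
  ultimately have "wf r" by (rule finite_acyclic_wf)
  moreover have "w0 \<in> C" using w0 by (simp add: C_def)
  ultimately obtain z where z: "z \<in> C" and zmin: "\<And>y. (y, z) \<in> r \<Longrightarrow> y \<notin> C"
    by (rule wfE_min) blast
  have "z \<in> Dom p q"
    unfolding Dom_def
  proof (intro CollectI conjI notI)
    show "set z \<subseteq> Sigma q" using z by (simp add: C_def)
  next
    assume "\<exists>u. set u \<subseteq> Sigma q \<and> llex_less u z \<and> str_equiv p q u z"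
    then obtain u where u: "set u \<subseteq> Sigma q" "llex_less u z" "str_equiv p q u z" by blast
    have "length u \<le> length z" using u(2) by (auto simp: llex_char)
    moreover have "sim p q (strpoly u) G"
    proof -
      have "sim p q (strpoly z) G" using z by (simp add: C_def)
      then show ?thesis using sim_trans[OF u(3)[unfolded str_equiv_def]] by blast
    qed
    moreover have "length z \<le> length w0" using z by (simp add: C_def)
    ultimately have "u \<in> C" using u(1) unfolding C_def by simp
    moreover have "(u, z) \<in> r" using \<open>u \<in> C\<close> z u(2) unfolding r_def by blast
    ultimately show False using zmin by blast
  qed
  then show ?thesis using z by (auto simp: C_def)
qed

lemma dom_unique:
  assumes "w1 \<in> Dom p q" "w2 \<in> Dom p q" "sim p q (strpoly w1) G" "sim p q (strpoly w2) G"
  shows "w1 = w2"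
proof (rule ccontr)
  assume ne: "w1 \<noteq> w2"
  have e12: "str_equiv p q w1 w2" "str_equiv p q w2 w1"
    using assms(3,4) sim_sym sim_trans unfolding str_equiv_def by blast+
  have s: "set w1 \<subseteq> Sigma q" "set w2 \<subseteq> Sigma q" using assms(1,2) by (auto simp: Dom_def)
  from llex_total[OF ne] show False
  proof
    assume "llex_less w1 w2" then show False using assms(2) s e12 by (auto simp: Dom_def)
  next
    assume "llex_less w2 w1" then show False using assms(1) s e12 by (auto simp: Dom_def)
  qed
qed

lemma phi_ex1:
  assumes pq: "1 + \<bar>p\<bar> < \<bar>q\<bar>"
  shows "\<exists>!w'. w' \<in> Dom p q \<and> sim p q (strpoly w') G"
  using dom_ex[OF pq] dom_unique by blast




lemma fa_dom:
  assumes pq: "1 + \<bar>p\<bar> < \<bar>q\<bar>"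
  shows "fa_recognizable (Dom p q)"
proof -
  define L2 where "L2 = {conv2 u v | u v. set u \<subseteq> Sigma q \<and> set v \<subseteq> Sigma q \<and> sim p q (strpoly v) (1 * strpoly u)}
     \<inter> {conv2 u w | u w. llex_less u w}"
  have "fa_recognizable L2" unfolding L2_def by (rule fa_inter[OF fa_rel[OF pq] fa_llex])
  then have P: "fa_recognizable {w. \<exists>c\<in>L2. map snd c = map Some w}" by (rule fa_proj)
  have Pe: "{w. \<exists>c\<in>L2. map snd c = map Some w} =
    {w. \<exists>u. set u \<subseteq> Sigma q \<and> set w \<subseteq> Sigma q \<and> llex_less u w \<and> str_equiv p q u w}"
  proof (intro set_eqI iffI)
    fix w assume "w \<in> {w. \<exists>c\<in>L2. map snd c = map Some w}"
    then obtain c where c: "c \<in> L2" "map snd c = map Some w" by blast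
    from c(1) obtain u v where cuv: "c = conv2 u v" "set u \<subseteq> Sigma q" "set v \<subseteq> Sigma q"
      "sim p q (strpoly v) (1 * strpoly u)" "llex_less u v"
      unfolding L2_def by (auto simp: conv2_inj)
    then have "v = w" using c(2) map_snd_conv2 by blast
    moreover have "str_equiv p q u v" using cuv(4) sim_sym unfolding str_equiv_def by simp
    ultimately show "w \<in> {w. \<exists>u. set u \<subseteq> Sigma q \<and> set w \<subseteq> Sigma q \<and> llex_less u w \<and> str_equiv p q u w}"
      using cuv by blast
  next
    fix w assume "w \<in> {w. \<exists>u. set u \<subseteq> Sigma q \<and> set w \<subseteq> Sigma q \<and> llex_less u w \<and> str_equiv p q u w}"
    then obtain u where u: "set u \<subseteq> Sigma q" "set w \<subseteq> Sigma q" "llex_less u w" "str_equiv p q u w" by blast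
    have "sim p q (strpoly w) (1 * strpoly u)" using u(4) sim_sym unfolding str_equiv_def by simp
    then have "conv2 u w \<in> L2" using u unfolding L2_def by blast
    moreover have "length u \<le> length w" using u(3) by (auto simp: llex_char)
    then have "map snd (conv2 u w) = map Some w" using map_snd_conv2 by blast
    ultimately show "w \<in> {w. \<exists>c\<in>L2. map snd c = map Some w}" by blast
  qed
  have "Dom p q = {w. set w \<subseteq> Sigma q} \<inter> - {w. \<exists>c\<in>L2. map snd c = map Some w}"
    unfolding Pe Dom_def by blast
  then show ?thesis using fa_inter[OF fa_alpha fa_compl[OF P]] by simp
qed

theorem proposition2:
  fixes p q :: int and g :: "int poly"
  assumes "1 + \<bar>p\<bar> < \<bar>q\<bar>"
  shows "fa_recognizable_rel2 {(w, phi p q g w) | w. w \<in> Dom p q}"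
proof -
  note pq = assms
  define Lg where "Lg = {conv2 u v | u v. set u \<subseteq> Sigma q \<and> set v \<subseteq> Sigma q \<and> sim p q (strpoly v) (g * strpoly u)}"
  have phi: "phi p q g w \<in> Dom p q \<and> sim p q (strpoly (phi p q g w)) (g * strpoly w)" for w
    unfolding phi_def by (rule theI'[OF phi_ex1[OF pq]])
  have "fa_recognizable (Lg \<inter> {c. opts (map fst c) \<in> Dom p q} \<inter> {c. opts (map snd c) \<in> Dom p q})"
    unfolding Lg_def
    by (intro fa_inter fa_rel[OF pq] fa_lift1 fa_lift2 fa_dom[OF pq])
  moreover have "Lg \<inter> {c. opts (map fst c) \<in> Dom p q} \<inter> {c. opts (map snd c) \<in> Dom p q} =
     {conv2 u v | u v. (u, v) \<in> {(w, phi p q g w) | w. w \<in> Dom p q}}"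
  proof (intro set_eqI iffI)
    fix c assume c: "c \<in> Lg \<inter> {c. opts (map fst c) \<in> Dom p q} \<inter> {c. opts (map snd c) \<in> Dom p q}"
    then obtain u v where uv: "c = conv2 u v" "sim p q (strpoly v) (g * strpoly u)"
      unfolding Lg_def by blast
    then have "u \<in> Dom p q" "v \<in> Dom p q" using c by auto
    then have "phi p q g u = v" using phi[of u] dom_unique uv(2) by blast
    then show "c \<in> {conv2 u v | u v. (u, v) \<in> {(w, phi p q g w) | w. w \<in> Dom p q}}"
      using uv(1) \<open>u \<in> Dom p q\<close> by blast
  next
    fix c assume "c \<in> {conv2 u v | u v. (u, v) \<in> {(w, phi p q g w) | w. w \<in> Dom p q}}"
    then obtain w where w: "c = conv2 w (phi p q g w)" "w \<in> Dom p q" by blast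
    have s: "set w \<subseteq> Sigma q" "set (phi p q g w) \<subseteq> Sigma q" using w(2) phi[of w] by (auto simp: Dom_def)
    have "c \<in> Lg" unfolding Lg_def using w(1) s phi[of w] by blast
    then show "c \<in> Lg \<inter> {c. opts (map fst c) \<in> Dom p q} \<inter> {c. opts (map snd c) \<in> Dom p q}"
      using w phi[of w] by simp
  qed
  ultimately show ?thesis unfolding fa_recognizable_rel2_def by simp
qed


end
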